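(* For $p=2$, \[ F_0(q)= \frac14 \sum_{\mathbf n \in \mathbb{Z}^2} \left(12 n_1 n_2-3n_1^2-3n_2^2-n_1-n_2\right) q^{ 2 Q\left(\mathbf n-\left(\frac12,\frac12\right)\right) }. \]
   Context: $q:=e^{2\pi i\tau}$, $\tau\in\mathbb H$. $Q(\mathbf n):=n_1^2+n_2^2-n_1n_2$. With $p=2$, \begin{align*} F(\zeta_1,\zeta_2;q)&:=\sum_{n_1,n_2\in\mathbb Z}\frac{q^{2Q\left(n_1-\frac12,\,n_2-\frac12\right)}}{\left(1-\zeta_1^{-1}\right)\left(1-\zeta_2^{-1}\right)\left(1-\zeta_1^{-1}\zeta_2^{-1}\right)}\Big(\zeta_1^{n_1-1} \zeta_2^{n_2-1} -\zeta_1^{-n_1+n_2-1}\zeta_2^{n_2-1}\\ &\qquad-\zeta_1^{n_1-1}\zeta_2^{-n_2+n_1-1}+\zeta_1^{-n_2-1} \zeta_2^{-n_2+n_1-1}+\zeta_1^{-n_1+n_2-1} \zeta_2^{-n_1-1}-\zeta_1^{-n_2-1}\zeta_2^{-n_1-1}\Big), \end{align*} where each summand is a Laurent polynomial in $\zeta_1,\zeta_2$, and $F_0(q):=\lim_{(\zeta_1,\zeta_2)\to(1,1)}F(\zeta_1,\zeta_2;q)$. *)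

theory Defs
  imports "HOL-Analysis.Analysis"
begin

text \<open>Fractional power of the nome: q^x := exp(2 pi i tau x), with q = e^(2 pi i tau).\<close>
definition qpow :: "complex \<Rightarrow> real \<Rightarrow> complex" where
  "qpow \<tau> x = exp (2 * complex_of_real pi * \<i> * \<tau> * complex_of_real x)"

definition Qform :: "real \<Rightarrow> real \<Rightarrow> real" where
  "Qform x y = x^2 + y^2 - x * y"

definition F_term :: "complex \<Rightarrow> complex \<Rightarrow> complex \<Rightarrow> int \<times> int \<Rightarrow> complex" where
  "F_term z1 z2 \<tau> n = (let n1 = fst n; n2 = snd n in
     qpow \<tau> (2 * Qform (real_of_int n1 - 1/2) (real_of_int n2 - 1/2))
     / ((1 - inverse z1) * (1 - inverse z2) * (1 - inverse z1 * inverse z2))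
     * ( z1 powi (n1 - 1) * z2 powi (n2 - 1)
       - z1 powi (-n1 + n2 - 1) * z2 powi (n2 - 1)
       - z1 powi (n1 - 1) * z2 powi (-n2 + n1 - 1)
       + z1 powi (-n2 - 1) * z2 powi (-n2 + n1 - 1)
       + z1 powi (-n1 + n2 - 1) * z2 powi (-n1 - 1)
       - z1 powi (-n2 - 1) * z2 powi (-n1 - 1)))"

definition F :: "complex \<Rightarrow> complex \<Rightarrow> complex \<Rightarrow> complex" where
  "F z1 z2 \<tau> = (\<Sum>\<^sub>\<infinity> n\<in>(UNIV :: (int \<times> int) set). F_term z1 z2 \<tau> n)"

definition regular_pts :: "(complex \<times> complex) set" where
  "regular_pts = {(z1, z2). z1 \<noteq> 0 \<and> z2 \<noteq> 0 \<and> z1 \<noteq> 1 \<and> z2 \<noteq> 1 \<and> z1 * z2 \<noteq> 1}"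

end

theory Submission
  imports Defs
begin


definition G :: "int \<Rightarrow> complex \<Rightarrow> complex" where
  "G k z = (if 0 \<le> k then (\<Sum>i<nat k. z ^ i) else - (\<Sum>i\<in>{1..nat (-k)}. inverse z ^ i))"

lemma G_nonneg: "G (int m) z = (\<Sum>i<m. z ^ i)"
  by (simp add: G_def)

lemma G_neg: "G (- int m) z = - (\<Sum>i\<in>{1..m}. inverse z ^ i)"
  by (cases "m = 0") (auto simp: G_def)

lemma G_mult_nonneg: "(z - 1) * (\<Sum>i<m. z ^ i) = z ^ m - (1::complex)"
  by (induction m) (auto simp: algebra_simps)

lemma G_mult_neg: "z \<noteq> 0 \<Longrightarrow> (z - 1) * (- (\<Sum>i\<in>{1..m}. inverse z ^ i)) = inverse z ^ m - (1::complex)"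
proof (induction m)
  case 0 then show ?case by simp
next
  case (Suc m)
  have "(z - 1) * (- (\<Sum>i\<in>{1..Suc m}. inverse z ^ i)) = (z - 1) * (- (\<Sum>i\<in>{1..m}. inverse z ^ i)) - (z-1) * inverse z ^ Suc m"
    by (simp add: algebra_simps)
  also have "\<dots> = inverse z ^ m - 1 - (z-1) * inverse z ^ Suc m" using Suc by simp
  also have "\<dots> = inverse z ^ Suc m - 1" using Suc.prems by (simp add: field_simps)
  finally show ?case .
qed

lemma G_mult: assumes z: "z \<noteq> 0" shows "(z - 1) * G k z = z powi k - 1"
proof (cases "0 \<le> k")
  case True
  then obtain m where "k = int m" by (metis nonneg_eq_int)
  then show ?thesis by (simp add: G_nonneg G_mult_nonneg)
next
  case False
  then obtain m where "k = - int m" by (metis minus_minus nonneg_eq_int neg_0_le_iff_le linear)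
  then show ?thesis using G_mult_neg[OF z, of m] False
    by (simp add: G_neg power_int_minus power_inverse)
qed

lemma G_one: "G k 1 = of_int k"
  by (auto simp: G_def)

definition GG :: "int \<Rightarrow> int \<Rightarrow> int \<Rightarrow> complex \<Rightarrow> complex \<Rightarrow> complex" where
  "GG al be ga z1 z2 = (if 0 \<le> ga then (\<Sum>i<nat ga. G (al + int i) z1 * G (be + int i) z2)
      else - (\<Sum>i\<in>{1..nat (-ga)}. G (al - int i) z1 * G (be - int i) z2))"

definition E :: "int \<Rightarrow> int \<Rightarrow> int \<Rightarrow> complex \<Rightarrow> complex \<Rightarrow> complex" where
  "E al be ga z1 z2 = z1 powi al * z2 powi be * G ga (z1 * z2)"

lemma GG_nonneg_aux:
  assumes z1: "z1 \<noteq> 0" and z2: "z2 \<noteq> 0"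
  shows "(z1-1)*(z2-1)*(\<Sum>i<m. G (al + int i) z1 * G (be + int i) z2) =
    z1 powi al * z2 powi be * (\<Sum>i<m. (z1*z2)^i) - z1 powi al * (\<Sum>i<m. z1^i)
    - z2 powi be * (\<Sum>i<m. z2^i) + of_nat m"
proof (induction m)
  case 0 then show ?case by simp
next
  case (Suc m)
  have a: "(z1-1) * G (al + int m) z1 = z1 powi al * z1 ^ m - 1"
    using G_mult[OF z1, of "al + int m"] z1 by (simp add: power_int_add)
  have b: "(z2-1) * G (be + int m) z2 = z2 powi be * z2 ^ m - 1"
    using G_mult[OF z2, of "be + int m"] z2 by (simp add: power_int_add)
  have "(z1-1)*(z2-1)*(\<Sum>i<Suc m. G (al + int i) z1 * G (be + int i) z2) =
     (z1-1)*(z2-1)*(\<Sum>i<m. G (al + int i) z1 * G (be + int i) z2)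
     + ((z1-1) * G (al + int m) z1) * ((z2-1) * G (be + int m) z2)"
    by (simp add: algebra_simps)
  also have "\<dots> = z1 powi al * z2 powi be * (\<Sum>i<m. (z1*z2)^i) - z1 powi al * (\<Sum>i<m. z1^i)
    - z2 powi be * (\<Sum>i<m. z2^i) + of_nat m + (z1 powi al * z1 ^ m - 1) * (z2 powi be * z2 ^ m - 1)"
    using Suc a b by simp
  also have "\<dots> = z1 powi al * z2 powi be * (\<Sum>i<Suc m. (z1*z2)^i) - z1 powi al * (\<Sum>i<Suc m. z1^i)
    - z2 powi be * (\<Sum>i<Suc m. z2^i) + of_nat (Suc m)"
    by (simp add: algebra_simps power_mult_distrib)
  finally show ?case .
qed

lemma GG_neg_aux:
  assumes z1: "z1 \<noteq> 0" and z2: "z2 \<noteq> 0"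
  shows "(z1-1)*(z2-1)*(- (\<Sum>i\<in>{1..m}. G (al - int i) z1 * G (be - int i) z2)) =
    z1 powi al * z2 powi be * (- (\<Sum>i\<in>{1..m}. inverse (z1*z2)^i)) - z1 powi al * (- (\<Sum>i\<in>{1..m}. inverse z1^i))
    - z2 powi be * (- (\<Sum>i\<in>{1..m}. inverse z2^i)) - of_nat m"
proof (induction m)
  case 0 then show ?case by simp
next
  case (Suc m)
  have a: "(z1-1) * G (al - int (Suc m)) z1 = z1 powi al * inverse z1 ^ Suc m - 1"
  proof -
    have "z1 powi (al - int (Suc m)) = z1 powi al * inverse z1 ^ Suc m"
      using z1 by (subst power_int_diff) (auto simp: field_simps power_inverse simp del: of_nat_Suc)
    then show ?thesis using G_mult[OF z1, of "al - int (Suc m)"] by simp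
  qed
  have b: "(z2-1) * G (be - int (Suc m)) z2 = z2 powi be * inverse z2 ^ Suc m - 1"
  proof -
    have "z2 powi (be - int (Suc m)) = z2 powi be * inverse z2 ^ Suc m"
      using z2 by (subst power_int_diff) (auto simp: field_simps power_inverse simp del: of_nat_Suc)
    then show ?thesis using G_mult[OF z2, of "be - int (Suc m)"] by simp
  qed
  have "(z1-1)*(z2-1)*(- (\<Sum>i\<in>{1..Suc m}. G (al - int i) z1 * G (be - int i) z2)) =
     (z1-1)*(z2-1)*(- (\<Sum>i\<in>{1..m}. G (al - int i) z1 * G (be - int i) z2))
     - ((z1-1) * G (al - int (Suc m)) z1) * ((z2-1) * G (be - int (Suc m)) z2)"
    by (simp add: algebra_simps)
  also have "\<dots> = z1 powi al * z2 powi be * (- (\<Sum>i\<in>{1..m}. inverse (z1*z2)^i)) - z1 powi al * (- (\<Sum>i\<in>{1..m}. inverse z1^i))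
    - z2 powi be * (- (\<Sum>i\<in>{1..m}. inverse z2^i)) - of_nat m - (z1 powi al * inverse z1 ^ Suc m - 1) * (z2 powi be * inverse z2 ^ Suc m - 1)"
    using Suc a b by simp
  also have "\<dots> = z1 powi al * z2 powi be * (- (\<Sum>i\<in>{1..Suc m}. inverse (z1*z2)^i)) - z1 powi al * (- (\<Sum>i\<in>{1..Suc m}. inverse z1^i))
    - z2 powi be * (- (\<Sum>i\<in>{1..Suc m}. inverse z2^i)) - of_nat (Suc m)"
    by (simp add: algebra_simps power_mult_distrib)
  finally show ?case .
qed

lemma GG_mult:
  assumes z1: "z1 \<noteq> 0" and z2: "z2 \<noteq> 0"
  shows "(z1-1)*(z2-1)*GG al be ga z1 z2 = E al be ga z1 z2 - E al be ga z1 1 - E al be ga 1 z2 + E al be ga 1 1"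
proof (cases "0 \<le> ga")
  case True
  then obtain m where m: "ga = int m" by (metis nonneg_eq_int)
  show ?thesis using GG_nonneg_aux[OF z1 z2, of al be m]
    by (simp add: GG_def E_def m G_nonneg G_one)
next
  case False
  then obtain m where m: "ga = - int m" "0 < m" by (metis minus_minus nonneg_eq_int neg_0_le_iff_le linear neq0_conv of_nat_0 order_refl)
  show ?thesis using GG_neg_aux[OF z1 z2, of al be m] False
    by (simp add: GG_def E_def m G_neg G_one)
qed

definition M :: "int \<Rightarrow> int \<Rightarrow> complex \<Rightarrow> complex \<Rightarrow> complex" where
  "M a b z1 z2 = z1 powi a * z2 powi b - z1 powi (b-a) * z2 powi b - z1 powi a * z2 powi (a-b)
     + z1 powi (-b) * z2 powi (a-b) + z1 powi (b-a) * z2 powi (-a) - z1 powi (-b) * z2 powi (-a)"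

definition K :: "int \<Rightarrow> int \<Rightarrow> complex \<Rightarrow> complex \<Rightarrow> complex" where
  "K a b z1 z2 = E (-b) (-a) (a+b) z1 z2 + E (b-a) b (a-b-b) z1 z2 + E a (a-b) (b-a-a) z1 z2"

definition chi :: "int \<Rightarrow> int \<Rightarrow> complex \<Rightarrow> complex \<Rightarrow> complex" where
  "chi a b z1 z2 = GG (-b) (-a) (a+b) z1 z2 + GG (b-a) b (a-b-b) z1 z2 + GG a (a-b) (b-a-a) z1 z2"

lemma E_mult:
  assumes z1: "z1 \<noteq> 0" and z2: "z2 \<noteq> 0"
  shows "(z1*z2 - 1) * E al be ga z1 z2 = z1 powi al * z2 powi be * (z1 powi ga * z2 powi ga - 1)"
proof -
  have "(z1*z2 - 1) * E al be ga z1 z2 = z1 powi al * z2 powi be * ((z1*z2 - 1) * G ga (z1*z2))"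
    by (simp add: E_def algebra_simps)
  also have "\<dots> = z1 powi al * z2 powi be * (z1 powi ga * z2 powi ga - 1)"
    using G_mult[of "z1*z2" ga] z1 z2 by (simp add: power_int_mult_distrib)
  finally show ?thesis .
qed

lemma pw:
  fixes z :: complex
  assumes z: "z \<noteq> 0"
  shows "z powi (-b) = inverse (z powi b)" "z powi (a+b) = z powi a * z powi b"
    "z powi (b-a) = z powi b / z powi a" "z powi (a-b) = z powi a / z powi b"
    "z powi (a-b-b) = z powi a / (z powi b * z powi b)"
    "z powi (b-a-a) = z powi b / (z powi a * z powi a)"
    "z powi (-a) = inverse (z powi a)"
proof -
  show "z powi (-b) = inverse (z powi b)" "z powi (a+b) = z powi a * z powi b"
    "z powi (b-a) = z powi b / z powi a" "z powi (a-b) = z powi a / z powi b"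
    "z powi (-a) = inverse (z powi a)"
    using z by (simp_all add: power_int_add power_int_diff power_int_minus)
  have "z powi (a-b-b) = z powi (a-b) / z powi b" using z by (rule power_int_diff[OF disjI1])
  also have "z powi (a-b) = z powi a / z powi b" using z by (rule power_int_diff[OF disjI1])
  finally show "z powi (a-b-b) = z powi a / (z powi b * z powi b)" by simp
  have "z powi (b-a-a) = z powi (b-a) / z powi a" using z by (rule power_int_diff[OF disjI1])
  also have "z powi (b-a) = z powi b / z powi a" using z by (rule power_int_diff[OF disjI1])
  finally show "z powi (b-a-a) = z powi b / (z powi a * z powi a)" by simp
qed

lemma K_mult:
  assumes z1: "z1 \<noteq> 0" and z2: "z2 \<noteq> 0"
  shows "(z1*z2 - 1) * K a b z1 z2 = M a b z1 z2"
  unfolding K_def distrib_left E_mult[OF z1 z2] M_def pw[OF z1] pw[OF z2]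
  using z1 z2 by (simp add: field_simps)

lemma K_z1_one:
  assumes "z1 \<noteq> 0" "z1 \<noteq> 1" shows "K a b z1 1 = 0"
proof -
  have "(z1*1 - 1) * K a b z1 1 = M a b z1 1" using K_mult[of z1 1] assms by simp
  also have "\<dots> = 0" by (simp add: M_def)
  finally show ?thesis using assms by simp
qed

lemma K_one_z2:
  assumes "z2 \<noteq> 0" "z2 \<noteq> 1" shows "K a b 1 z2 = 0"
proof -
  have "(1*z2 - 1) * K a b 1 z2 = M a b 1 z2" using K_mult[of 1 z2] assms by simp
  also have "\<dots> = 0" by (simp add: M_def)
  finally show ?thesis using assms by simp
qed

lemma K_one_one: "K a b 1 1 = 0"
  by (simp add: K_def E_def G_one)

lemma chi_mult:
  assumes "(z1, z2) \<in> regular_pts"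
  shows "(z1-1)*(z2-1)*(z1*z2-1)*chi a b z1 z2 = M a b z1 z2"
proof -
  have z: "z1 \<noteq> 0" "z2 \<noteq> 0" "z1 \<noteq> 1" "z2 \<noteq> 1" "z1*z2 \<noteq> 1" using assms by (auto simp: regular_pts_def)
  have "(z1-1)*(z2-1)*chi a b z1 z2 = K a b z1 z2 - K a b z1 1 - K a b 1 z2 + K a b 1 1"
    unfolding chi_def distrib_left GG_mult[OF z(1,2)] K_def by (simp add: algebra_simps)
  also have "\<dots> = K a b z1 z2" using z by (simp add: K_z1_one K_one_z2 K_one_one)
  finally have "(z1*z2-1)*((z1-1)*(z2-1)*chi a b z1 z2) = M a b z1 z2" using K_mult[OF z(1,2)] by simp
  then show ?thesis by (simp add: algebra_simps)
qed

lemma pw1: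
  fixes z :: complex
  assumes z: "z \<noteq> 0"
  shows "z powi (a - 1) = z powi a / z" "z powi (-a - 1) = inverse (z powi a) / z"
    "z powi (-a + b - 1) = z powi b / z powi a / z"
proof -
  show "z powi (a - 1) = z powi a / z" using z by (simp add: power_int_diff)
  show "z powi (-a - 1) = inverse (z powi a) / z" using z by (simp add: power_int_diff power_int_minus)
  have "z powi (-a + b - 1) = z powi (-a + b) / z" using z by (simp add: power_int_diff)
  also have "z powi (-a + b) = z powi b / z powi a" using power_int_add[OF disjI1[OF z], of "-a" b]
    by (simp only: power_int_minus) (simp add: field_simps)
  finally show "z powi (-a + b - 1) = z powi b / z powi a / z" .
qed

definition wt :: "complex \<Rightarrow> int \<times> int \<Rightarrow> complex" where
  "wt \<tau> n = qpow \<tau> (2 * Qform (real_of_int (fst n) - 1/2) (real_of_int (snd n) - 1/2))"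

definition T :: "complex \<Rightarrow> int \<times> int \<Rightarrow> complex \<times> complex \<Rightarrow> complex" where
  "T \<tau> n z = wt \<tau> n * (fst z * snd z * chi (fst n) (snd n) (fst z) (snd z))"

lemma F_term_T:
  assumes "(z1, z2) \<in> regular_pts"
  shows "F_term z1 z2 \<tau> n = T \<tau> n (z1, z2)"
proof -
  obtain a b where n: "n = (a, b)" by (cases n)
  have z: "z1 \<noteq> 0" "z2 \<noteq> 0" "z1 \<noteq> 1" "z2 \<noteq> 1" "z1*z2 \<noteq> 1" using assms by (auto simp: regular_pts_def)
  have z1': "z1 - 1 \<noteq> 0" "z2 - 1 \<noteq> 0" "z1*z2 - 1 \<noteq> 0" using z by auto
  have num: "z1 powi (a - 1) * z2 powi (b - 1)
       - z1 powi (-a + b - 1) * z2 powi (b - 1)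
       - z1 powi (a - 1) * z2 powi (-b + a - 1)
       + z1 powi (-b - 1) * z2 powi (-b + a - 1)
       + z1 powi (-a + b - 1) * z2 powi (-a - 1)
       - z1 powi (-b - 1) * z2 powi (-a - 1) = M a b z1 z2 / (z1 * z2)"
    unfolding pw1[OF z(1)] pw1[OF z(2)] M_def pw[OF z(1)] pw[OF z(2)]
    using z by (simp add: field_simps)
  have den: "(1 - inverse z1) * (1 - inverse z2) * (1 - inverse z1 * inverse z2)
      = (z1-1)*(z2-1)*(z1*z2-1) / (z1*z2)^2"
    using z by (simp add: field_simps power2_eq_square)
  have chi: "chi a b z1 z2 = M a b z1 z2 / ((z1-1)*(z2-1)*(z1*z2-1))"
  proof -
    have X: "(z1-1)*(z2-1)*(z1*z2-1) \<noteq> 0" using z1' by simp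
    have "chi a b z1 z2 = ((z1-1)*(z2-1)*(z1*z2-1) * chi a b z1 z2) / ((z1-1)*(z2-1)*(z1*z2-1))"
      using X by simp
    then show ?thesis using chi_mult[OF assms, of a b] by simp
  qed
  show ?thesis
    unfolding F_term_def n Let_def fst_conv snd_conv num den T_def wt_def chi
    using z z1' by (simp add: field_simps power2_eq_square)
qed

definition SS :: "int \<Rightarrow> int \<Rightarrow> int \<Rightarrow> int" where
  "SS al be ga = (if 0 \<le> ga then (\<Sum>i<nat ga. (al + int i) * (be + int i))
      else - (\<Sum>i\<in>{1..nat (-ga)}. (al - int i) * (be - int i)))"

lemma GG_one: "GG al be ga 1 1 = of_int (SS al be ga)"
  by (simp add: GG_def SS_def G_one)

lemma SS_nonneg_aux: "6 * (\<Sum>i<m. (al + int i) * (be + int i)) =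
   6*int m*al*be + 3*(al+be)*int m*(int m - 1) + int m*(int m-1)*(2*int m-1)"
proof (induction m)
  case 0 then show ?case by simp
next
  case (Suc m)
  have "6 * (\<Sum>i<Suc m. (al + int i) * (be + int i)) = 6 * (\<Sum>i<m. (al + int i) * (be + int i)) + 6 * ((al + int m) * (be + int m))"
    by (simp add: algebra_simps)
  also have "\<dots> = 6*int m*al*be + 3*(al+be)*int m*(int m - 1) + int m*(int m-1)*(2*int m-1) + 6 * ((al + int m) * (be + int m))"
    using Suc by simp
  also have "\<dots> = 6*int (Suc m)*al*be + 3*(al+be)*int (Suc m)*(int (Suc m) - 1) + int (Suc m)*(int (Suc m)-1)*(2*int (Suc m)-1)"
    by (simp add: algebra_simps)
  finally show ?case .
qed

lemma SS_neg_aux: "6 * (- (\<Sum>i\<in>{1..m}. (al - int i) * (be - int i))) =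
   6*(-int m)*al*be + 3*(al+be)*(-int m)*(-int m - 1) + (-int m)*(-int m-1)*(2*(-int m)-1)"
proof (induction m)
  case 0 then show ?case by simp
next
  case (Suc m)
  have "6 * (- (\<Sum>i\<in>{1..Suc m}. (al - int i) * (be - int i))) = 6 * (- (\<Sum>i\<in>{1..m}. (al - int i) * (be - int i))) - 6 * ((al - int (Suc m)) * (be - int (Suc m)))"
    by (simp add: algebra_simps)
  also have "\<dots> = 6*(-int m)*al*be + 3*(al+be)*(-int m)*(-int m - 1) + (-int m)*(-int m-1)*(2*(-int m)-1) - 6 * ((al - int (Suc m)) * (be - int (Suc m)))"
    using Suc by simp
  also have "\<dots> = 6*(-int (Suc m))*al*be + 3*(al+be)*(-int (Suc m))*(-int (Suc m) - 1) + (-int (Suc m))*(-int (Suc m)-1)*(2*(-int (Suc m))-1)"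
    by (simp add: algebra_simps)
  finally show ?case .
qed

lemma SS_formula: "6 * SS al be ga = 6*ga*al*be + 3*(al+be)*ga*(ga - 1) + ga*(ga-1)*(2*ga-1)"
proof (cases "0 \<le> ga")
  case True
  then obtain m where m: "ga = int m" by (metis nonneg_eq_int)
  show ?thesis using SS_nonneg_aux[where m=m and al=al and be=be] by (simp add: SS_def m)
next
  case False
  then obtain m where m: "ga = - int m" "0 < m" by (metis minus_minus nonneg_eq_int neg_0_le_iff_le linear neq0_conv of_nat_0 order_refl)
  show ?thesis using SS_neg_aux[where m=m and al=al and be=be] False by (simp add: SS_def m)
qed

definition Lint :: "int \<Rightarrow> int \<Rightarrow> int" where
  "Lint a b = - ((a - 2*b) * (2*a - b) * (a + b))"

lemma chi_one: "2 * chi a b 1 1 = of_int (Lint a b)"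
proof -
  have "6 * (SS (-b) (-a) (a+b) + SS (b-a) b (a-b-b) + SS a (a-b) (b-a-a)) = 3 * Lint a b"
    unfolding distrib_left SS_formula Lint_def by (simp add: algebra_simps)
  then have "2 * (SS (-b) (-a) (a+b) + SS (b-a) b (a-b-b) + SS a (a-b) (b-a-a)) = Lint a b" by linarith
  then have "of_int (2 * (SS (-b) (-a) (a+b) + SS (b-a) b (a-b-b) + SS a (a-b) (b-a-a))) = (of_int (Lint a b) :: complex)"
    by simp
  then show ?thesis by (simp add: chi_def GG_one)
qed


lemma sum_pow_bound:
  fixes r :: real
  assumes "0 \<le> r" "r \<le> 2" "\<And>i. i \<in> I \<Longrightarrow> i \<le> m" "finite I" "card I \<le> m"
  shows "(\<Sum>i\<in>I. r ^ i) \<le> 4 ^ m"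
proof -
  have "(\<Sum>i\<in>I. r ^ i) \<le> (\<Sum>i\<in>I. 2 ^ m)"
  proof (rule sum_mono)
    fix i assume "i \<in> I"
    have "r ^ i \<le> 2 ^ i" using assms(1,2) by (intro power_mono)
    also have "\<dots> \<le> 2 ^ m" using assms(3)[OF \<open>i \<in> I\<close>] by (rule power_increasing) simp
    finally show "r ^ i \<le> 2 ^ m" .
  qed
  also have "\<dots> = real (card I) * 2 ^ m" by simp
  also have "\<dots> \<le> real m * 2 ^ m" using assms(5) by (intro mult_right_mono) auto
  also have "\<dots> \<le> 2 ^ m * 2 ^ m"
  proof -
    have "m < 2 ^ m" by (rule less_exp)
    then have "real m \<le> 2 ^ m" by (metis less_imp_le of_nat_less_iff of_nat_numeral of_nat_power)
    then show ?thesis by (intro mult_right_mono) auto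
  qed
  also have "\<dots> = 4 ^ m" by (simp flip: power_mult_distrib)
  finally show ?thesis .
qed

lemma G_bound:
  assumes "norm z \<le> 2" "norm (inverse z) \<le> 2"
  shows "norm (G k z) \<le> 4 ^ nat \<bar>k\<bar>"
proof (cases "0 \<le> k")
  case True
  have "norm (G k z) \<le> (\<Sum>i<nat k. norm z ^ i)"
    using True by (simp add: G_def) (metis (no_types, lifting) norm_power norm_sum sum.cong)
  also have "\<dots> \<le> 4 ^ nat k" using assms by (intro sum_pow_bound) auto
  finally show ?thesis using True by simp
next
  case False
  have "norm (G k z) \<le> (\<Sum>i\<in>{1..nat (-k)}. norm (inverse z) ^ i)"
    using False by (simp add: G_def) (metis (no_types, lifting) norm_power norm_sum sum.cong)
  also have "\<dots> \<le> 4 ^ nat (-k)" using assms by (intro sum_pow_bound) auto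
  finally show ?thesis using False by simp
qed

lemma GG_bound:
  assumes "norm z1 \<le> 2" "norm (inverse z1) \<le> 2" "norm z2 \<le> 2" "norm (inverse z2) \<le> 2"
  shows "norm (GG al be ga z1 z2) \<le> 4 ^ (nat \<bar>al\<bar> + nat \<bar>be\<bar> + 3 * nat \<bar>ga\<bar>)"
proof -
  define m where "m = nat \<bar>ga\<bar>"
  define e where "e = nat \<bar>al\<bar> + nat \<bar>be\<bar> + 2 * m"
  have trm: "norm (G (al + s) z1 * G (be + s) z2) \<le> 4 ^ e" if "\<bar>s\<bar> \<le> int m" for s
  proof -
    have "norm (G (al + s) z1 * G (be + s) z2) \<le> 4 ^ nat \<bar>al + s\<bar> * 4 ^ nat \<bar>be + s\<bar>"
      unfolding norm_mult using G_bound assms by (intro mult_mono) auto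
    also have "\<dots> = 4 ^ (nat \<bar>al + s\<bar> + nat \<bar>be + s\<bar>)" by (simp add: power_add)
    also have "\<dots> \<le> 4 ^ e" using that unfolding e_def by (intro power_increasing) auto
    finally show ?thesis .
  qed
  have "norm (GG al be ga z1 z2) \<le> real m * 4 ^ e"
  proof (cases "0 \<le> ga")
    case True
    have "norm (GG al be ga z1 z2) \<le> (\<Sum>i<nat ga. norm (G (al + int i) z1 * G (be + int i) z2))"
      using True by (simp add: GG_def norm_sum)
    also have "\<dots> \<le> (\<Sum>i<nat ga. 4 ^ e)" using True by (intro sum_mono trm) (auto simp: m_def)
    finally show ?thesis using True by (simp add: m_def)
  next
    case False
    have "norm (GG al be ga z1 z2) \<le> (\<Sum>i\<in>{1..nat (-ga)}. norm (G (al - int i) z1 * G (be - int i) z2))"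
      using False by (simp add: GG_def norm_sum)
    also have "\<dots> \<le> (\<Sum>i\<in>{1..nat (-ga)}. 4 ^ e)" using False trm[of "- int _"]
      by (intro sum_mono) (auto simp: m_def)
    finally show ?thesis using False by (simp add: m_def)
  qed
  also have "\<dots> \<le> 4 ^ m * 4 ^ e"
  proof -
    have "m < 2 ^ m" by (rule less_exp)
    then have "real m \<le> 2 ^ m" by (metis less_imp_le of_nat_less_iff of_nat_numeral of_nat_power)
    also have "(2::real) ^ m \<le> 4 ^ m" by (intro power_mono) auto
    finally show ?thesis by (intro mult_right_mono) auto
  qed
  also have "\<dots> = 4 ^ (nat \<bar>al\<bar> + nat \<bar>be\<bar> + 3 * nat \<bar>ga\<bar>)"
    by (simp add: e_def m_def flip: power_add)
  finally show ?thesis .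
qed

lemma exps1: "nat \<bar>-b\<bar> + nat \<bar>-a\<bar> + 3 * nat \<bar>a+b\<bar> \<le> 8 * nat (\<bar>a::int\<bar> + \<bar>b\<bar>)"
proof -
  have h: "\<bar>a+b\<bar> \<le> \<bar>a\<bar> + \<bar>b\<bar>" by (rule abs_triangle_ineq)
  have l: "int (nat \<bar>-b\<bar> + nat \<bar>-a\<bar> + 3 * nat \<bar>a+b\<bar>) = \<bar>b\<bar> + \<bar>a\<bar> + 3 * \<bar>a+b\<bar>" by simp
  have r: "int (8 * nat (\<bar>a::int\<bar> + \<bar>b\<bar>)) = 8 * \<bar>a\<bar> + 8 * \<bar>b\<bar>" by simp
  have "int (nat \<bar>-b\<bar> + nat \<bar>-a\<bar> + 3 * nat \<bar>a+b\<bar>) \<le> int (8 * nat (\<bar>a::int\<bar> + \<bar>b\<bar>))"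
    unfolding l r using h abs_ge_zero[of a] abs_ge_zero[of b] by linarith
  then show ?thesis by linarith
qed
lemma exps2: "nat \<bar>b-a\<bar> + nat \<bar>b\<bar> + 3 * nat \<bar>a-b-b\<bar> \<le> 8 * nat (\<bar>a::int\<bar> + \<bar>b\<bar>)"
proof -
  have h: "\<bar>a-b-b\<bar> \<le> \<bar>a\<bar> + 2*\<bar>b\<bar>" "\<bar>b-a\<bar> \<le> \<bar>a\<bar> + \<bar>b\<bar>" by auto
  have l: "int (nat \<bar>b-a\<bar> + nat \<bar>b\<bar> + 3 * nat \<bar>a-b-b\<bar>) = \<bar>b-a\<bar> + \<bar>b\<bar> + 3 * \<bar>a-b-b\<bar>" by simp
  have r: "int (8 * nat (\<bar>a::int\<bar> + \<bar>b\<bar>)) = 8 * \<bar>a\<bar> + 8 * \<bar>b\<bar>" by simp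
  have "int (nat \<bar>b-a\<bar> + nat \<bar>b\<bar> + 3 * nat \<bar>a-b-b\<bar>) \<le> int (8 * nat (\<bar>a::int\<bar> + \<bar>b\<bar>))"
    unfolding l r using h abs_ge_zero[of a] abs_ge_zero[of b] by linarith
  then show ?thesis by linarith
qed
lemma exps3: "nat \<bar>a\<bar> + nat \<bar>a-b\<bar> + 3 * nat \<bar>b-a-a\<bar> \<le> 8 * nat (\<bar>a::int\<bar> + \<bar>b\<bar>)"
proof -
  have h: "\<bar>b-a-a\<bar> \<le> 2*\<bar>a\<bar> + \<bar>b\<bar>" "\<bar>a-b\<bar> \<le> \<bar>a\<bar> + \<bar>b\<bar>" by auto
  have l: "int (nat \<bar>a\<bar> + nat \<bar>a-b\<bar> + 3 * nat \<bar>b-a-a\<bar>) = \<bar>a\<bar> + \<bar>a-b\<bar> + 3 * \<bar>b-a-a\<bar>" by simp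
  have r: "int (8 * nat (\<bar>a::int\<bar> + \<bar>b\<bar>)) = 8 * \<bar>a\<bar> + 8 * \<bar>b\<bar>" by simp
  have "int (nat \<bar>a\<bar> + nat \<bar>a-b\<bar> + 3 * nat \<bar>b-a-a\<bar>) \<le> int (8 * nat (\<bar>a::int\<bar> + \<bar>b\<bar>))"
    unfolding l r using h abs_ge_zero[of a] abs_ge_zero[of b] by linarith
  then show ?thesis by linarith
qed
lemma chi_bound:
  assumes "norm z1 \<le> 2" "norm (inverse z1) \<le> 2" "norm z2 \<le> 2" "norm (inverse z2) \<le> 2"
  shows "norm (chi a b z1 z2) \<le> 3 * 4 ^ (8 * nat (\<bar>a\<bar> + \<bar>b\<bar>))"
proof -
  let ?N = "8 * nat (\<bar>a\<bar> + \<bar>b\<bar>)"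
  have e1: "nat \<bar>-b\<bar> + nat \<bar>-a\<bar> + 3 * nat \<bar>a+b\<bar> \<le> ?N" by (rule exps1)
  have e2: "nat \<bar>b-a\<bar> + nat \<bar>b\<bar> + 3 * nat \<bar>a-b-b\<bar> \<le> ?N" by (rule exps2)
  have e3: "nat \<bar>a\<bar> + nat \<bar>a-b\<bar> + 3 * nat \<bar>b-a-a\<bar> \<le> ?N" by (rule exps3)
  have t: "norm (chi a b z1 z2) \<le> norm (GG (-b) (-a) (a+b) z1 z2) + norm (GG (b-a) b (a-b-b) z1 z2) + norm (GG a (a-b) (b-a-a) z1 z2)"
    unfolding chi_def by (rule order_trans[OF norm_triangle_ineq add_right_mono[OF norm_triangle_ineq]])
  have b1: "norm (GG (-b) (-a) (a+b) z1 z2) \<le> 4 ^ ?N"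
    by (rule order_trans[OF GG_bound[OF assms] power_increasing[OF e1]]) simp
  have b2: "norm (GG (b-a) b (a-b-b) z1 z2) \<le> 4 ^ ?N"
    by (rule order_trans[OF GG_bound[OF assms] power_increasing[OF e2]]) simp
  have b3: "norm (GG a (a-b) (b-a-a) z1 z2) \<le> 4 ^ ?N"
    by (rule order_trans[OF GG_bound[OF assms] power_increasing[OF e3]]) simp
  show ?thesis using t b1 b2 b3 by linarith
qed



lemma e_summable_int: "(\<lambda>k::int. exp (- \<bar>real_of_int k\<bar>)) summable_on UNIV"
proof -
  let ?e = "\<lambda>k::int. exp (- \<bar>real_of_int k\<bar>)"
  have geo: "summable (\<lambda>n::nat. exp (-1::real) ^ n)"
    by (rule summable_geometric) simp
  have p1: "(\<lambda>n::nat. exp (-1::real) ^ n) summable_on UNIV"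
    by (rule summable_nonneg_imp_summable_on_strong[OF geo]) simp
  have "(?e \<circ> int) = (\<lambda>n::nat. exp (-1::real) ^ n)"
    by (auto simp: fun_eq_iff simp flip: exp_of_nat_mult)
  then have s1: "?e summable_on range int"
    using p1 by (subst summable_on_reindex) (auto simp: inj_on_def)
  have "(?e \<circ> (\<lambda>n::nat. - int n - 1)) = (\<lambda>n::nat. exp (-1) * exp (-1::real) ^ n)"
    by (auto simp: fun_eq_iff simp flip: exp_of_nat_mult exp_add)
  moreover have "(\<lambda>n::nat. exp (-1) * exp (-1::real) ^ n) summable_on UNIV"
    using p1 by (rule summable_on_cmult_right)
  ultimately have s2: "?e summable_on range (\<lambda>n::nat. - int n - 1)"
    by (subst summable_on_reindex) (auto simp: inj_on_def)
  have U: "range int \<union> range (\<lambda>n::nat. - int n - 1) = UNIV"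
  proof (intro set_eqI iffI)
    fix k :: int
    show "k \<in> range int \<union> range (\<lambda>n::nat. - int n - 1)"
    proof (cases "0 \<le> k")
      case True then show ?thesis by (metis UnI1 nonneg_eq_int rangeI)
    next
      case False
      then have "k = - int (nat (-k - 1)) - 1" by simp
      then show ?thesis by (metis UnI2 rangeI)
    qed
  qed simp
  have "?e summable_on (range int \<union> range (\<lambda>n::nat. - int n - 1))"
    by (rule summable_on_Un_disjoint[OF s1 s2]) auto
  then show ?thesis using U by simp
qed

lemma e2_summable: "(\<lambda>n::int\<times>int. exp (- \<bar>real_of_int (fst n)\<bar>) * exp (- \<bar>real_of_int (snd n)\<bar>)) summable_on UNIV"
proof -
  let ?e = "\<lambda>k::int. exp (- \<bar>real_of_int k\<bar>)"
  define S where "S = infsum ?e UNIV"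
  have hs: "(?e has_sum S) UNIV" unfolding S_def using e_summable_int by (rule has_sum_infsum)
  have "(\<lambda>n::int\<times>int. ?e (fst n) * ?e (snd n)) summable_on Sigma UNIV (\<lambda>_. UNIV)"
  proof (rule summable_on_SigmaI)
    fix x :: int
    show "((\<lambda>y. ?e (fst (x, y)) * ?e (snd (x, y))) has_sum (?e x * S)) UNIV"
      using has_sum_cmult_right[OF hs, of "?e x"] by simp
  next
    show "(\<lambda>x. ?e x * S) summable_on UNIV"
      using e_summable_int by (rule summable_on_cmult_left)
  qed auto
  then show ?thesis by simp
qed


lemma sq_bound:
  fixes c K x :: real
  assumes c: "c > 0"
  shows "K * \<bar>x\<bar> - c * x^2 / 4 \<le> K^2 / c"
proof -
  have "0 \<le> (c * \<bar>x\<bar> / 2 - K)^2" by simp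
  then have "(K * \<bar>x\<bar> - c * x^2 / 4) * c \<le> K^2"
    by (simp add: power2_eq_square algebra_simps abs_mult_self_eq)
  then show ?thesis using c by (simp add: pos_le_divide_eq)
qed

lemma key_ineq:
  fixes c K x y :: real
  assumes c: "c > 0"
  shows "K * (\<bar>x\<bar> + \<bar>y\<bar>) - c * Qform (x - 1/2) (y - 1/2) \<le> 2 * K^2 / c + c / 4"
proof -
  have q1: "Qform (x - 1/2) (y - 1/2) \<ge> ((x-1/2)^2 + (y-1/2)^2) / 2"
  proof -
    have e: "Qform u v = (u^2+v^2)/2 + (u-v)^2/2" for u v :: real
      unfolding Qform_def by (simp add: power2_eq_square field_simps)
    have "0 \<le> ((x-1/2) - (y-1/2))^2 / 2" by simp
    then show ?thesis unfolding e by linarith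
  qed
  have q2: "(x-1/2)^2 \<ge> x^2/2 - 1/4" "(y-1/2)^2 \<ge> y^2/2 - 1/4"
  proof -
    have "0 \<le> (x - 1)^2" "0 \<le> (y - 1)^2" by simp_all
    then show "(x-1/2)^2 \<ge> x^2/2 - 1/4" "(y-1/2)^2 \<ge> y^2/2 - 1/4"
      by (simp_all add: power2_eq_square algebra_simps)
  qed
  have "c * Qform (x - 1/2) (y - 1/2) \<ge> c * (x^2/4 + y^2/4 - 1/4)"
    using q1 q2 c by (intro mult_left_mono) auto
  moreover have "K * \<bar>x\<bar> - c * x^2 / 4 \<le> K^2 / c" "K * \<bar>y\<bar> - c * y^2 / 4 \<le> K^2 / c"
    using sq_bound[OF c] by auto
  ultimately show ?thesis by (simp add: algebra_simps)
qed

definition Nn :: "int \<times> int \<Rightarrow> nat" where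
  "Nn n = nat (\<bar>fst n\<bar> + \<bar>snd n\<bar>)"

definition Bnd :: "complex \<Rightarrow> int \<times> int \<Rightarrow> real" where
  "Bnd \<tau> n = 12 * 4 ^ (8 * Nn n) * norm (wt \<tau> n)"

lemma norm_wt: "norm (wt \<tau> n) = exp (- (4 * pi * Im \<tau>) * Qform (real_of_int (fst n) - 1/2) (real_of_int (snd n) - 1/2))"
  by (simp add: wt_def qpow_def norm_exp_eq_Re)

lemma Bnd_summable:
  assumes "Im \<tau> > 0"
  shows "Bnd \<tau> summable_on UNIV"
proof -
  define c where "c = 4 * pi * Im \<tau>"
  have c: "c > 0" using assms by (simp add: c_def)
  define K where "K = 8 * ln 4 + (1::real)"
  define A where "A = 2 * K^2 / c + c / 4"
  have le: "Bnd \<tau> n \<le> (12 * exp A) * (exp (- \<bar>real_of_int (fst n)\<bar>) * exp (- \<bar>real_of_int (snd n)\<bar>))" for n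
  proof -
    obtain a b where n: "n = (a, b)" by (cases n)
    have N: "real (Nn n) = \<bar>real_of_int a\<bar> + \<bar>real_of_int b\<bar>"
      by (simp add: Nn_def n)
    have p: "(4::real) ^ (8 * Nn n) = exp (8 * ln 4 * real (Nn n))"
    proof -
      have "exp (8 * ln 4 * real (Nn n)) = exp (real (8 * Nn n) * ln 4)"
        by (simp add: algebra_simps)
      also have "\<dots> = exp (ln 4) ^ (8 * Nn n)" by (rule exp_of_nat_mult)
      finally show ?thesis by simp
    qed
    have ki: "K * (\<bar>real_of_int a\<bar> + \<bar>real_of_int b\<bar>) - c * Qform (real_of_int a - 1/2) (real_of_int b - 1/2) \<le> A"
      unfolding A_def by (rule key_ineq[OF c])
    have "Bnd \<tau> n = 12 * exp (8 * ln 4 * real (Nn n)) * exp (- c * Qform (real_of_int (fst n) - 1/2) (real_of_int (snd n) - 1/2))"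
      unfolding Bnd_def p norm_wt c_def ..
    also have "\<dots> = 12 * exp (8 * ln 4 * real (Nn n) - c * Qform (real_of_int a - 1/2) (real_of_int b - 1/2))"
      by (simp add: n exp_diff exp_minus field_simps)
    also have "\<dots> \<le> 12 * exp (A - \<bar>real_of_int a\<bar> - \<bar>real_of_int b\<bar>)"
      using ki unfolding N K_def by (simp add: algebra_simps)
    also have "\<dots> = (12 * exp A) * (exp (- \<bar>real_of_int (fst n)\<bar>) * exp (- \<bar>real_of_int (snd n)\<bar>))"
      by (simp add: n exp_diff exp_minus exp_add field_simps)
    finally show ?thesis .
  qed
  show ?thesis
  proof (rule summable_on_comparison_test)
    show "(\<lambda>n. (12 * exp A) * (exp (- \<bar>real_of_int (fst n)\<bar>) * exp (- \<bar>real_of_int (snd n)\<bar>))) summable_on UNIV"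
      using e2_summable by (rule summable_on_cmult_right)
  qed (use le in \<open>auto simp: Bnd_def\<close>)
qed



lemma infsum_split_finite:
  fixes f :: "'i \<Rightarrow> 'b::banach"
  assumes "f summable_on UNIV" "finite Fin"
  shows "infsum f UNIV = sum f Fin + infsum f (UNIV - Fin)"
proof -
  have "infsum f (Fin \<union> (UNIV - Fin)) = infsum f Fin + infsum f (UNIV - Fin)"
    by (rule infsum_Un_disjoint) (use assms in \<open>auto intro: summable_on_subset_banach summable_on_finite\<close>)
  then show ?thesis using assms(2) by simp
qed

lemma infsum_tendsto_dom:
  fixes TT :: "'i \<Rightarrow> 'a \<Rightarrow> complex" and B :: "'i \<Rightarrow> real"
  assumes B: "B summable_on UNIV"
    and bnd: "eventually (\<lambda>x. \<forall>n. norm (TT n x) \<le> B n) FF"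
    and bnd0: "\<And>n. norm (TT n x0) \<le> B n"
    and lim: "\<And>n. ((\<lambda>x. TT n x) \<longlongrightarrow> TT n x0) FF"
  shows "((\<lambda>x. infsum (\<lambda>n. TT n x) UNIV) \<longlongrightarrow> infsum (\<lambda>n. TT n x0) UNIV) FF"
proof (rule tendstoI)
  fix e :: real assume e: "e > 0"
  obtain Fin where Fin: "finite Fin" "dist (sum B Fin) (infsum B UNIV) \<le> e/4"
    using infsum_finite_approximation[OF B, of "e/4"] e by auto
  have tailB: "infsum B (UNIV - Fin) \<le> e/4"
    using infsum_split_finite[OF B Fin(1)] Fin(2) by (simp add: dist_real_def)
  have Bsum: "B summable_on (UNIV - Fin)" using B by (rule summable_on_subset_banach) auto
  have tail: "norm (infsum (\<lambda>n. TT n x) (UNIV - Fin)) \<le> e/4" if "\<forall>n. norm (TT n x) \<le> B n" for x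
  proof -
    have as: "(\<lambda>n. norm (TT n x)) summable_on (UNIV - Fin)"
      by (rule summable_on_comparison_test[OF Bsum]) (use that in auto)
    have "norm (infsum (\<lambda>n. TT n x) (UNIV - Fin)) \<le> infsum (\<lambda>n. norm (TT n x)) (UNIV - Fin)"
      using as by (rule norm_infsum_bound)
    also have "\<dots> \<le> infsum B (UNIV - Fin)"
      using as Bsum that by (intro infsum_mono) auto
    finally show ?thesis using tailB by linarith
  qed
  have summ: "(\<lambda>n. TT n x) summable_on UNIV" if "\<forall>n. norm (TT n x) \<le> B n" for x
  proof -
    have "(\<lambda>n. norm (TT n x)) summable_on UNIV"
      by (rule summable_on_comparison_test[OF B]) (use that in auto)
    then show ?thesis by (rule abs_summable_summable)
  qed
  have "((\<lambda>x. \<Sum>n\<in>Fin. TT n x) \<longlongrightarrow> (\<Sum>n\<in>Fin. TT n x0)) FF"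
    by (intro tendsto_sum lim)
  then have ev: "eventually (\<lambda>x. dist (\<Sum>n\<in>Fin. TT n x) (\<Sum>n\<in>Fin. TT n x0) < e/4) FF"
    using e by (intro tendstoD) auto
  show "eventually (\<lambda>x. dist (infsum (\<lambda>n. TT n x) UNIV) (infsum (\<lambda>n. TT n x0) UNIV) < e) FF"
    using ev bnd
  proof eventually_elim
    case (elim x)
    have b0: "\<forall>n. norm (TT n x0) \<le> B n" using bnd0 by auto
    have "dist (infsum (\<lambda>n. TT n x) UNIV) (infsum (\<lambda>n. TT n x0) UNIV)
       = norm (((\<Sum>n\<in>Fin. TT n x) - (\<Sum>n\<in>Fin. TT n x0)) + infsum (\<lambda>n. TT n x) (UNIV - Fin) - infsum (\<lambda>n. TT n x0) (UNIV - Fin))"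
      unfolding dist_norm infsum_split_finite[OF summ[OF elim(2)] Fin(1)] infsum_split_finite[OF summ[OF b0] Fin(1)]
      by (simp add: algebra_simps)
    also have "\<dots> \<le> norm ((\<Sum>n\<in>Fin. TT n x) - (\<Sum>n\<in>Fin. TT n x0)) + norm (infsum (\<lambda>n. TT n x) (UNIV - Fin)) + norm (infsum (\<lambda>n. TT n x0) (UNIV - Fin))"
      by (rule order_trans[OF norm_triangle_ineq4 add_right_mono[OF norm_triangle_ineq]])
    also have "\<dots> < e/4 + e/4 + e/4"
      using elim(1) tail[OF elim(2)] tail[OF b0] by (simp add: dist_norm)
    finally show ?case using e by linarith
  qed
qed



lemma near_one:
  fixes z :: complex
  assumes "dist z 1 < 1/2"
  shows "norm z \<le> 2" "norm (inverse z) \<le> 2"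
proof -
  have d: "norm (z - 1) < 1/2" using assms by (simp add: dist_norm)
  have "norm z \<le> norm (z - 1) + norm (1::complex)" by (metis norm_triangle_sub add.commute)
  then show "norm z \<le> 2" using d by simp
  have "norm (1::complex) \<le> norm z + norm (z - 1)" by (metis norm_triangle_sub norm_minus_commute add.commute)
  then have nz: "norm z \<ge> 1/2" using d by simp
  then have "inverse (norm z) \<le> inverse (1/2)" by (intro le_imp_inverse_le) auto
  then show "norm (inverse z) \<le> 2" by (simp add: norm_inverse)
qed

lemma T_bound:
  assumes "dist z (1,1) < 1/2"
  shows "norm (T \<tau> n z) \<le> Bnd \<tau> n"
proof -
  have d1: "dist (fst z) 1 < 1/2" using dist_fst_le[of z "(1,1)"] assms by simp
  have d2: "dist (snd z) 1 < 1/2" using dist_snd_le[of z "(1,1)"] assms by simp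
  note b1 = near_one[OF d1] and b2 = near_one[OF d2]
  have c: "norm (chi (fst n) (snd n) (fst z) (snd z)) \<le> 3 * 4 ^ (8 * Nn n)"
    unfolding Nn_def by (rule chi_bound[OF b1 b2])
  have "norm (fst z * snd z * chi (fst n) (snd n) (fst z) (snd z)) \<le> 2 * 2 * (3 * 4 ^ (8 * Nn n))"
    unfolding norm_mult using b1 b2 c by (intro mult_mono) auto
  then have "norm (wt \<tau> n) * norm (fst z * snd z * chi (fst n) (snd n) (fst z) (snd z)) \<le> norm (wt \<tau> n) * (2 * 2 * (3 * 4 ^ (8 * Nn n)))"
    by (intro mult_left_mono) auto
  then show ?thesis by (simp add: T_def Bnd_def norm_mult algebra_simps)
qed

definition Pint :: "int \<times> int \<Rightarrow> int" where
  "Pint n = 12 * fst n * snd n - 3 * (fst n)^2 - 3 * (snd n)^2 - fst n - snd n"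

lemma Pint_abs: "\<bar>Pint n\<bar> \<le> 7 * (1 + (\<bar>fst n\<bar> + \<bar>snd n\<bar>))^2"
proof -
  obtain a b where n: "n = (a, b)" by (cases n)
  have h1: "\<bar>a*b\<bar> = \<bar>a\<bar>*\<bar>b\<bar>" by (simp add: abs_mult)
  have h2: "a*b \<le> \<bar>a*b\<bar>" "-\<bar>a*b\<bar> \<le> a*b" by auto
  have h3: "7 * (1 + (\<bar>a\<bar> + \<bar>b\<bar>))^2 = 7 + 14*\<bar>a\<bar> + 14*\<bar>b\<bar> + 7*a^2 + 14*(\<bar>a\<bar>*\<bar>b\<bar>) + 7*b^2"
    by (simp add: power2_eq_square algebra_simps abs_mult_self_eq)
  have h4: "0 \<le> a^2" "0 \<le> b^2" "0 \<le> \<bar>a\<bar>*\<bar>b\<bar>" "a \<le> \<bar>a\<bar>" "-\<bar>a\<bar> \<le> a" "b \<le> \<bar>b\<bar>" "-\<bar>b\<bar> \<le> b" by auto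
  have "Pint n = 12 * (a*b) - 3 * a^2 - 3 * b^2 - a - b" by (simp add: Pint_def n)
  then show ?thesis unfolding n fst_conv snd_conv h3 using h1 h2 h4 by linarith
qed

lemma P_bound: "norm (of_int (Pint n) * wt \<tau> n) \<le> Bnd \<tau> n"
proof -
  define N where "N = Nn n"
  have N: "int N = \<bar>fst n\<bar> + \<bar>snd n\<bar>" by (simp add: N_def Nn_def)
  have "Suc N \<le> 2 ^ N" using less_exp[of N] by (simp add: Suc_le_eq)
  then have "Suc N * Suc N \<le> 2 ^ N * 2 ^ N" by (intro mult_mono) auto
  then have "(1 + N)^2 \<le> 4 ^ N" by (simp add: power2_eq_square flip: power_mult_distrib)
  then have "int ((1 + N)^2) \<le> int (4 ^ N)" by linarith
  then have "\<bar>Pint n\<bar> \<le> 7 * int (4 ^ N)" using Pint_abs[of n] unfolding N[symmetric] by simp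
  then have "real_of_int \<bar>Pint n\<bar> \<le> 7 * 4 ^ N" by (metis (mono_tags, opaque_lifting) of_int_le_iff of_int_mult of_int_numeral of_int_of_nat_eq of_nat_numeral of_nat_power)
  also have "(7::real) * 4 ^ N \<le> 12 * 4 ^ (8 * N)" by (intro mult_mono power_increasing) auto
  finally have "\<bar>real_of_int (Pint n)\<bar> \<le> 12 * 4 ^ (8 * N)" by simp
  then have "\<bar>real_of_int (Pint n)\<bar> * norm (wt \<tau> n) \<le> 12 * 4 ^ (8 * N) * norm (wt \<tau> n)"
    by (intro mult_right_mono) auto
  then show ?thesis by (simp add: Bnd_def N_def norm_mult)
qed

lemma summable_bound:
  fixes f :: "'i \<Rightarrow> complex"
  assumes "g summable_on UNIV" "\<And>n. norm (f n) \<le> g n"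
  shows "f summable_on UNIV"
proof -
  have "(\<lambda>n. norm (f n)) summable_on UNIV"
    by (rule summable_on_comparison_test[OF assms(1)]) (use assms(2) in auto)
  then show ?thesis by (rule abs_summable_summable)
qed

lemma G_tendsto:
  assumes f: "(f \<longlongrightarrow> 1) FF" shows "((\<lambda>x. G k (f x)) \<longlongrightarrow> G k 1) FF"
proof (cases "0 \<le> k")
  case True
  have "((\<lambda>x. \<Sum>i<nat k. f x ^ i) \<longlongrightarrow> (\<Sum>i<nat k. 1 ^ i)) FF"
    by (intro tendsto_sum tendsto_power f)
  then show ?thesis using True by (simp add: G_def)
next
  case False
  have "((\<lambda>x. - (\<Sum>i\<in>{1..nat (-k)}. inverse (f x) ^ i)) \<longlongrightarrow> - (\<Sum>i\<in>{1..nat (-k)}. inverse 1 ^ i)) FF"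
    by (intro tendsto_minus tendsto_sum tendsto_power tendsto_inverse f) simp
  then show ?thesis using False by (simp add: G_def)
qed

lemma GG_tendsto: "(f \<longlongrightarrow> 1) FF \<Longrightarrow> (g \<longlongrightarrow> 1) FF \<Longrightarrow> ((\<lambda>x. GG al be ga (f x) (g x)) \<longlongrightarrow> GG al be ga 1 1) FF"
  unfolding GG_def by (cases "0 \<le> ga") (auto intro!: tendsto_intros G_tendsto)

lemma chi_tendsto: "(f \<longlongrightarrow> 1) FF \<Longrightarrow> (g \<longlongrightarrow> 1) FF \<Longrightarrow> ((\<lambda>x. chi a b (f x) (g x)) \<longlongrightarrow> chi a b 1 1) FF"
  unfolding chi_def by (intro tendsto_add GG_tendsto)

lemma T_tendsto: "((\<lambda>z. T \<tau> n z) \<longlongrightarrow> T \<tau> n (1,1)) (at (1,1) within S)"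
proof -
  have f: "((\<lambda>z::complex\<times>complex. fst z) \<longlongrightarrow> 1) (at (1,1) within S)"
    using tendsto_fst[OF tendsto_ident_at[of "(1::complex,1::complex)" S]] by simp
  have g: "((\<lambda>z::complex\<times>complex. snd z) \<longlongrightarrow> 1) (at (1,1) within S)"
    using tendsto_snd[OF tendsto_ident_at[of "(1::complex,1::complex)" S]] by simp
  have "((\<lambda>z. wt \<tau> n * (fst z * snd z * chi (fst n) (snd n) (fst z) (snd z))) \<longlongrightarrow>
      wt \<tau> n * (1 * 1 * chi (fst n) (snd n) 1 1)) (at (1,1) within S)"
    by (intro tendsto_mult tendsto_const chi_tendsto f g)
  then show ?thesis unfolding T_def by simp
qed



lemma D_sym: "2 * Lint (1-a) (1-b) - Pint (1-a, 1-b) = - (2 * Lint a b - Pint (a, b))"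
  by (simp add: Lint_def Pint_def power2_eq_square algebra_simps)

lemma wt_sym: "wt \<tau> (1 - fst n, 1 - snd n) = wt \<tau> n"
proof -
  have "Qform (real_of_int (1 - fst n) - 1/2) (real_of_int (1 - snd n) - 1/2) =
        Qform (real_of_int (fst n) - 1/2) (real_of_int (snd n) - 1/2)"
    by (simp add: Qform_def power2_eq_square algebra_simps)
  then show ?thesis by (simp add: wt_def)
qed

lemma T_one: "T \<tau> n (1,1) = wt \<tau> n * (of_int (Lint (fst n) (snd n)) / 2)"
proof -
  have "chi (fst n) (snd n) 1 1 = of_int (Lint (fst n) (snd n)) / 2"
    using chi_one[of "fst n" "snd n"] by (simp add: field_simps)
  then show ?thesis by (simp add: T_def)
qed

lemma value_identity:
  assumes "Im \<tau> > 0"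
  shows "infsum (\<lambda>n. T \<tau> n (1,1)) UNIV = (1/4) * infsum (\<lambda>n. of_int (Pint n) * wt \<tau> n) UNIV"
proof -
  define f where "f n = wt \<tau> n * (of_int (2 * Lint (fst n) (snd n) - Pint n) / 4)" for n
  have B: "Bnd \<tau> summable_on UNIV" using Bnd_summable[OF assms] .
  have sT: "(\<lambda>n. T \<tau> n (1,1)) summable_on UNIV"
    by (rule summable_bound[OF B]) (rule T_bound, simp)
  have sP: "(\<lambda>n. of_int (Pint n) * wt \<tau> n) summable_on UNIV"
    by (rule summable_bound[OF B]) (rule P_bound)
  have sP4: "(\<lambda>n. 1/4 * (of_int (Pint n) * wt \<tau> n)) summable_on UNIV"
    using sP by (rule summable_on_cmult_right)
  have eq: "T \<tau> n (1,1) = 1/4 * (of_int (Pint n) * wt \<tau> n) + f n" for n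
    unfolding T_one f_def by (simp add: field_simps)
  have sf: "f summable_on UNIV"
  proof -
    have "(\<lambda>n. T \<tau> n (1,1) + (-1/4) * (of_int (Pint n) * wt \<tau> n)) summable_on UNIV"
      using sT summable_on_cmult_right[OF sP, of "-1/4"] by (rule summable_on_add)
    moreover have "(\<lambda>n. T \<tau> n (1,1) + (-1/4) * (of_int (Pint n) * wt \<tau> n)) = f"
      using eq by (auto simp: fun_eq_iff)
    ultimately show ?thesis by simp
  qed
  have fsym: "f (1 - fst n, 1 - snd n) = - f n" for n
  proof -
    obtain a b where n: "n = (a, b)" by (cases n)
    have h: "(of_int (2 * Lint (1-a) (1-b) - Pint (1-a, 1-b)) :: complex) = - of_int (2 * Lint a b - Pint (a, b))"
      unfolding D_sym by (rule of_int_minus)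
    have w: "wt \<tau> (1 - a, 1 - b) = wt \<tau> (a, b)" using wt_sym[of \<tau> "(a,b)"] by simp
    have "f (1 - fst n, 1 - snd n) = wt \<tau> (a, b) * (- of_int (2 * Lint a b - Pint (a, b)) / 4)"
      unfolding f_def n fst_conv snd_conv w h ..
    also have "\<dots> = - f n" unfolding f_def n fst_conv snd_conv minus_divide_left[symmetric] mult_minus_right ..
    finally show ?thesis .
  qed
  have "infsum f UNIV = infsum (\<lambda>n. - f n) UNIV"
    by (rule infsum_reindex_bij_witness[where i = "\<lambda>n. (1 - fst n, 1 - snd n)" and j = "\<lambda>n. (1 - fst n, 1 - snd n)"])
       (auto simp: fsym)
  also have "\<dots> = - infsum f UNIV" by (rule infsum_uminus)
  finally have f0: "infsum f UNIV = 0" by simp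
  have "infsum (\<lambda>n. T \<tau> n (1,1)) UNIV = infsum (\<lambda>n. 1/4 * (of_int (Pint n) * wt \<tau> n) + f n) UNIV"
    using eq by simp
  also have "\<dots> = infsum (\<lambda>n. 1/4 * (of_int (Pint n) * wt \<tau> n)) UNIV + infsum f UNIV"
    by (rule infsum_add[OF sP4 sf])
  also have "\<dots> = (1/4) * infsum (\<lambda>n. of_int (Pint n) * wt \<tau> n) UNIV"
    unfolding f0 add_0_right by (rule infsum_cmult_right) (use sP in auto)
  finally show ?thesis .
qed

theorem proposition6p1:
  fixes \<tau> :: complex
  assumes "Im \<tau> > 0"
  shows "((\<lambda>z. F (fst z) (snd z) \<tau>) \<longlongrightarrow>
           (1/4) * (\<Sum>\<^sub>\<infinity> n\<in>(UNIV :: (int \<times> int) set).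
              of_int (12 * fst n * snd n - 3 * (fst n)^2 - 3 * (snd n)^2 - fst n - snd n)
              * qpow \<tau> (2 * Qform (real_of_int (fst n) - 1/2) (real_of_int (snd n) - 1/2))))
         (at (1, 1) within regular_pts)"
proof -
  have ev_bnd: "eventually (\<lambda>z. \<forall>n. norm (T \<tau> n z) \<le> Bnd \<tau> n) (at (1,1) within regular_pts)"
    unfolding eventually_at by (rule exI[of _ "1/2"]) (auto intro: T_bound)
  have lim: "((\<lambda>z. infsum (\<lambda>n. T \<tau> n z) UNIV) \<longlongrightarrow> infsum (\<lambda>n. T \<tau> n (1,1)) UNIV) (at (1,1) within regular_pts)"
    by (rule infsum_tendsto_dom[OF Bnd_summable[OF assms] ev_bnd]) (auto intro: T_bound T_tendsto)
  have ev_eq: "eventually (\<lambda>z. infsum (\<lambda>n. T \<tau> n z) UNIV = F (fst z) (snd z) \<tau>) (at (1,1) within regular_pts)"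
    unfolding eventually_at
  proof (rule exI[of _ 1], intro conjI ballI impI)
    show "(1::real) > 0" by simp
  next
    fix z :: "complex \<times> complex" assume "z \<in> regular_pts"
    then have "(fst z, snd z) \<in> regular_pts" by simp
    then show "infsum (\<lambda>n. T \<tau> n z) UNIV = F (fst z) (snd z) \<tau>"
      using F_term_T[of "fst z" "snd z"] by (simp add: F_def)
  qed
  have "((\<lambda>z. F (fst z) (snd z) \<tau>) \<longlongrightarrow> infsum (\<lambda>n. T \<tau> n (1,1)) UNIV) (at (1,1) within regular_pts)"
    by (rule Lim_transform_eventually[OF lim ev_eq])
  then show ?thesis unfolding value_identity[OF assms] Pint_def wt_def .
qed

end
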